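(* Let $w\in\{a,b\}^*$ (with $a\ne b$) satisfy $|w|>7$ and $l(w)=4$. Then every element of $\mathtt{BR}(w)$ is rich if and only if $w$ or its complement $w^c$ is of the form $ab^{n_2}ab^{n_4}$ or $a^{n_1}ba^{n_3}b$ (with $n_i\ge1$), or belongs to $S=\{a^{n_1}b^{n_2}a^{n_3}b^{n_4} : (n_2,n_4),(n_1,n_3)\in\{(3,1),(2,2),(1,3)\}\}$.
   Context: For a word $w=w_1\cdots w_n$, $|w|=n$, $w^R=w_n\cdots w_1$; $w$ is a palindrome if $w=w^R$; a factor of $w$ is a word $u$ with $w=puq$. A word $w$ is rich if the number of distinct nonempty palindromic factors of $w$ equals $|w|$. The block reversal of a nonempty word $w$ is $\mathtt{BR}(w)=\{B_t\cdots B_1 : w=B_1\cdots B_t,\ t\ge1,\ \text{each } B_i \text{ nonempty}\}$. Every nonempty word has a unique run-length encoding $w=c_1^{n_1}\cdots c_k^{n_k}$ with letters $c_i\neq c_{i+1}$, $n_i\ge1$; $l(w)=k$. The complement $w^c$ of $w\in\{a,b\}^*$ is obtained by exchanging $a$ and $b$. *)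

theory Defs
  imports Main
begin

definition palindrome :: "'a list \<Rightarrow> bool" where
  "palindrome w \<longleftrightarrow> rev w = w"

definition factors :: "'a list \<Rightarrow> 'a list set" where
  "factors w = {u. \<exists>p q. w = p @ u @ q}"

definition rich :: "'a list \<Rightarrow> bool" where
  "rich w \<longleftrightarrow> card {u \<in> factors w. u \<noteq> [] \<and> palindrome u} = length w"

definition BR :: "'a list \<Rightarrow> 'a list set" where
  "BR w = {concat (rev Bs) | Bs. Bs \<noteq> [] \<and> concat Bs = w \<and> (\<forall>B \<in> set Bs. B \<noteq> [])}"

definition runs :: "'a list \<Rightarrow> nat" where
  "runs w = length (remdups_adj w)"

definition compl_ab :: "'a \<Rightarrow> 'a \<Rightarrow> 'a list \<Rightarrow> 'a list" where
  "compl_ab a b w = map (\<lambda>x. if x = a then b else if x = b then a else x) w"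

definition good_form :: "'a \<Rightarrow> 'a \<Rightarrow> 'a list \<Rightarrow> bool" where
  "good_form a b w \<longleftrightarrow>
     (\<exists>n2 n4. n2 \<ge> 1 \<and> n4 \<ge> 1 \<and> w = [a] @ replicate n2 b @ [a] @ replicate n4 b) \<or>
     (\<exists>n1 n3. n1 \<ge> 1 \<and> n3 \<ge> 1 \<and> w = replicate n1 a @ [b] @ replicate n3 a @ [b]) \<or>
     (\<exists>n1 n2 n3 n4. (n2, n4) \<in> {(3,1),(2,2),(1,3)} \<and> (n1, n3) \<in> {(3,1),(2,2),(1,3)} \<and>
        w = replicate n1 a @ replicate n2 b @ replicate n3 a @ replicate n4 b)"

end

theory Submission
  imports Defs
begin



definition PF :: "'a list \<Rightarrow> 'a list set" where
  "PF w = {u \<in> factors w. u \<noteq> [] \<and> palindrome u}"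

lemma rich_PF: "rich w \<longleftrightarrow> card (PF w) = length w"
  by (simp add: rich_def PF_def)

lemma factors_sub: "factors w \<subseteq> {u. set u \<subseteq> set w \<and> length u \<le> length w}"
  by (auto simp: factors_def)

lemma finite_factors: "finite (factors w)"
  by (rule finite_subset[OF factors_sub]) (rule finite_lists_length_le, simp)

lemma finite_PF: "finite (PF w)"
  by (rule finite_subset[OF _ finite_factors[of w]]) (auto simp: PF_def)

lemma factors_mono_app: "u \<in> factors w \<Longrightarrow> u \<in> factors (w @ [x])"
proof -
  assume "u \<in> factors w"
  then obtain p q where "w = p @ u @ q" unfolding factors_def by blast
  then have "w @ [x] = p @ u @ (q @ [x])" by simp
  then show ?thesis unfolding factors_def by blast
qed

lemma PF_mono: "PF w \<subseteq> PF (w @ [x])"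
  unfolding PF_def using factors_mono_app by auto

lemma new_is_suffix:
  assumes "u \<in> factors (w @ [x])" "u \<notin> factors w"
  shows "\<exists>p. w @ [x] = p @ u"
proof -
  obtain p q where pq: "w @ [x] = p @ u @ q" using assms(1) unfolding factors_def by blast
  show ?thesis
  proof (cases q rule: rev_cases)
    case Nil
    then have "w @ [x] = p @ u" using pq by simp
    then show ?thesis by blast
  next
    case (snoc q' y)
    then have "w @ [x] = (p @ u @ q') @ [y]" using pq by simp
    then have "w = p @ u @ q'" using append1_eq_conv[of w x "p @ u @ q'" y] by blast
    then have "u \<in> factors w" unfolding factors_def by blast
    then show ?thesis using assms(2) by blast
  qed
qed

lemma new_unique_aux:
  assumes ha: "w @ [x] = pa @ a" and hb: "w @ [x] = pb @ b" and ra: "rev a = a" and rb: "rev b = b"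
    and lt: "length a < length b"
  shows "a \<in> factors w"
proof -
  have "pa @ a = pb @ b" using ha hb by simp
  then obtain us where us: "pa = pb @ us \<and> us @ a = b \<or> pa @ us = pb \<and> a = us @ b"
    using append_eq_append_conv2[of pa a pb b] by blast
  have z: "b = us @ a"
  proof (rule ccontr)
    assume "b \<noteq> us @ a"
    then have "a = us @ b" using us by blast
    then have "length a \<ge> length b" by simp
    then show False using lt by simp
  qed
  have "b = rev b" using rb by simp
  also have "\<dots> = rev a @ rev us" using z by simp
  also have "\<dots> = a @ rev us" using ra by simp
  finally have bz: "b = a @ rev us" .
  have "rev us \<noteq> []" using z lt by auto
  then obtain z' y where zy: "rev us = z' @ [y]" by (cases "rev us" rule: rev_cases) auto
  have "b = a @ z' @ [y]" using zy bz by simp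
  then have "w @ [x] = (pb @ a @ z') @ [y]" using hb by simp
  then have "w = pb @ a @ z'" using append1_eq_conv[of w x "pb @ a @ z'" y] by blast
  then show "a \<in> factors w" unfolding factors_def by blast
qed

lemma new_unique:
  assumes u1: "u1 \<in> PF (w @ [x]) - PF w" and u2: "u2 \<in> PF (w @ [x]) - PF w"
  shows "u1 = u2"
proof (rule ccontr)
  assume ne: "u1 \<noteq> u2"
  have g1: "u1 \<in> factors (w @ [x])" "u1 \<noteq> []" "rev u1 = u1" "u1 \<notin> PF w"
    using u1 unfolding PF_def palindrome_def by auto
  have g2: "u2 \<in> factors (w @ [x])" "u2 \<noteq> []" "rev u2 = u2" "u2 \<notin> PF w"
    using u2 unfolding PF_def palindrome_def by auto
  have f1: "u1 \<notin> factors w" using g1 unfolding PF_def palindrome_def by blast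
  have f2: "u2 \<notin> factors w" using g2 unfolding PF_def palindrome_def by blast
  obtain p1 where p1: "w @ [x] = p1 @ u1" using new_is_suffix[OF g1(1) f1] by blast
  obtain p2 where p2: "w @ [x] = p2 @ u2" using new_is_suffix[OF g2(1) f2] by blast
  have "length u1 \<noteq> length u2"
  proof
    assume "length u1 = length u2"
    moreover have "p1 @ u1 = p2 @ u2" using p1 p2 by simp
    ultimately have "u1 = u2" using append_eq_append_conv[of p1 p2 u1 u2] by simp
    then show False using ne by simp
  qed
  then consider "length u1 < length u2" | "length u2 < length u1" by linarith
  then show False
  proof cases
    case 1 then show False using new_unique_aux[OF p1 p2 g1(3) g2(3)] f1 by blast
  next
    case 2 then show False using new_unique_aux[OF p2 p1 g2(3) g1(3)] f2 by blast
  qed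
qed

lemma card_PF_snoc: "card (PF (w @ [x])) \<le> card (PF w) + 1"
proof -
  let ?D = "PF (w @ [x]) - PF w"
  have "card ?D \<le> 1"
  proof (cases "?D = {}")
    case True then show ?thesis by (metis card.empty zero_le)
  next
    case False
    then obtain u where u: "u \<in> ?D" by blast
    have "?D \<subseteq> {u}"
    proof
      fix v assume "v \<in> ?D"
      then have "v = u" by (rule new_unique[OF _ u])
      then show "v \<in> {u}" by simp
    qed
    then have "card ?D \<le> card {u}" by (rule card_mono[rotated]) simp
    then show ?thesis by simp
  qed
  moreover have "card ?D = card (PF (w @ [x])) - card (PF w)"
    by (rule card_Diff_subset[OF finite_PF PF_mono])
  moreover have "card (PF w) \<le> card (PF (w @ [x]))"
    by (rule card_mono[OF finite_PF PF_mono])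
  ultimately show ?thesis by linarith
qed

lemma card_PF_app: "card (PF (u @ y)) \<le> card (PF u) + length y"
proof (induction y rule: rev_induct)
  case Nil then show ?case by simp
next
  case (snoc c y)
  then show ?case using card_PF_snoc[of "u @ y" c] by simp
qed

lemma PF_Nil: "PF [] = {}"
  by (auto simp: PF_def factors_def)

lemma card_PF_le: "card (PF w) \<le> length w"
  using card_PF_app[of "[]" w] by (simp add: PF_Nil)

lemma factors_rev_sub: "u \<in> factors w \<Longrightarrow> rev u \<in> factors (rev w)"
proof -
  assume "u \<in> factors w"
  then obtain p q where "w = p @ u @ q" unfolding factors_def by blast
  then have "rev w = rev q @ rev u @ rev p" by simp
  then show ?thesis unfolding factors_def by blast
qed

lemma factors_rev: "factors (rev w) = rev ` factors w"
proof
  show "factors (rev w) \<subseteq> rev ` factors w"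
  proof
    fix u assume "u \<in> factors (rev w)"
    then have "rev u \<in> factors w" using factors_rev_sub[of u "rev w"] by simp
    then show "u \<in> rev ` factors w" by (rule rev_image_eqI) simp
  qed
next
  show "rev ` factors w \<subseteq> factors (rev w)" using factors_rev_sub by blast
qed

lemma PF_rev: "PF (rev w) = rev ` PF w"
proof
  show "PF (rev w) \<subseteq> rev ` PF w"
  proof
    fix u assume u: "u \<in> PF (rev w)"
    then have "rev u \<in> PF w" unfolding PF_def palindrome_def factors_rev by auto
    then show "u \<in> rev ` PF w" by (rule rev_image_eqI) simp
  qed
next
  show "rev ` PF w \<subseteq> PF (rev w)"
  proof
    fix u assume "u \<in> rev ` PF w"
    then obtain x where x: "x \<in> PF w" "u = rev x" by blast
    then have x1: "x \<in> factors w" "x \<noteq> []" "rev x = x" unfolding PF_def palindrome_def by auto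
    have "rev x \<in> factors (rev w)" by (rule factors_rev_sub[OF x1(1)])
    then show "u \<in> PF (rev w)" using x x1 unfolding PF_def palindrome_def by simp
  qed
qed

lemma card_PF_rev: "card (PF (rev w)) = card (PF w)"
  unfolding PF_rev by (simp add: card_image)

lemma card_PF_factor: "card (PF (x @ u @ y)) \<le> card (PF u) + length x + length y"
proof -
  have "card (PF (x @ u @ y)) = card (PF (rev y @ rev u @ rev x))"
    using card_PF_rev[of "x @ u @ y"] by simp
  also have "\<dots> = card (PF ((rev y @ rev u) @ rev x))" by simp
  also have "\<dots> \<le> card (PF (rev y @ rev u)) + length x" using card_PF_app[of "rev y @ rev u" "rev x"] by simp
  also have "card (PF (rev y @ rev u)) = card (PF (u @ y))"
    using card_PF_rev[of "u @ y"] by simp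
  also have "\<dots> \<le> card (PF u) + length y" by (rule card_PF_app)
  finally show ?thesis by simp
qed

lemma not_rich_factor: "\<not> rich u \<Longrightarrow> \<not> rich (x @ u @ y)"
  using card_PF_factor[of x u y] card_PF_le[of u] unfolding rich_PF by auto




lemma factors_map: "factors (map f w) = map f ` factors w"
proof
  show "factors (map f w) \<subseteq> map f ` factors w"
  proof
    fix u assume "u \<in> factors (map f w)"
    then obtain p q where "map f w = p @ (u @ q)" unfolding factors_def by blast
    then obtain p' r' where 1: "w = p' @ r'" "p = map f p'" "u @ q = map f r'"
      unfolding map_eq_append_conv by blast
    from 1(3) have "map f r' = u @ q" by simp
    then obtain u' q' where 2: "r' = u' @ q'" "u = map f u'" "q = map f q'"
      unfolding map_eq_append_conv by blast
    have "u' \<in> factors w" using 1 2 unfolding factors_def by blast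
    then show "u \<in> map f ` factors w" using 2 by blast
  qed
next
  show "map f ` factors w \<subseteq> factors (map f w)"
  proof
    fix u assume "u \<in> map f ` factors w"
    then obtain u' p q where "u = map f u'" "w = p @ u' @ q" unfolding factors_def by blast
    then have "map f w = map f p @ u @ map f q" by simp
    then show "u \<in> factors (map f w)" unfolding factors_def by blast
  qed
qed

lemma PF_map: assumes "inj f" shows "PF (map f w) = map f ` PF w"
proof -
  have pal: "palindrome (map f u) \<longleftrightarrow> palindrome u" for u
    unfolding palindrome_def rev_map using inj_map_eq_map[OF assms] by metis
  show ?thesis unfolding PF_def factors_map using pal by auto
qed

lemma rich_map: assumes "inj f" shows "rich (map f w) = rich w"
proof -
  have "inj_on (map f) (PF w)" using inj_mapI[OF assms] by (auto intro: inj_on_subset)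
  then show ?thesis unfolding rich_PF PF_map[OF assms] by (simp add: card_image)
qed

lemma concat_lift: "concat Bs = map f z \<Longrightarrow> \<exists>Cs. Bs = map (map f) Cs \<and> concat Cs = z"
proof (induction Bs arbitrary: z)
  case Nil then show ?case by auto
next
  case (Cons B Bs)
  then have "map f z = B @ concat Bs" by simp
  then obtain z1 z2 where z: "z = z1 @ z2" "B = map f z1" "concat Bs = map f z2"
    unfolding map_eq_append_conv by blast
  obtain Cs where "Bs = map (map f) Cs" "concat Cs = z2" using Cons.IH[OF z(3)] by blast
  then show ?case using z by (intro exI[of _ "z1 # Cs"]) simp
qed

lemma BR_map: "BR (map f w) = map f ` BR w"
proof
  show "BR (map f w) \<subseteq> map f ` BR w"
  proof
    fix v assume "v \<in> BR (map f w)"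
    then obtain Bs where Bs: "v = concat (rev Bs)" "Bs \<noteq> []" "concat Bs = map f w" "\<forall>B\<in>set Bs. B \<noteq> []"
      unfolding BR_def by auto
    obtain Cs where Cs: "Bs = map (map f) Cs" "concat Cs = w" using concat_lift[OF Bs(3)] by blast
    have "v = map f (concat (rev Cs))" using Bs(1) Cs(1) by (simp add: map_concat rev_map)
    moreover have "concat (rev Cs) \<in> BR w" unfolding BR_def using Bs Cs by auto
    ultimately show "v \<in> map f ` BR w" by auto
  qed
next
  show "map f ` BR w \<subseteq> BR (map f w)"
  proof
    fix v assume "v \<in> map f ` BR w"
    then obtain Cs where Cs: "v = map f (concat (rev Cs))" "Cs \<noteq> []" "concat Cs = w" "\<forall>B\<in>set Cs. B \<noteq> []"
      unfolding BR_def by auto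
    show "v \<in> BR (map f w)" unfolding BR_def
      using Cs by (intro CollectI exI[of _ "map (map f) Cs"]) (auto simp: map_concat rev_map)
  qed
qed

lemma BR_rich_map: assumes "inj f"
  shows "(\<forall>v\<in>BR (map f w). rich v) \<longleftrightarrow> (\<forall>v\<in>BR w. rich v)"
  unfolding BR_map using rich_map[OF assms] by auto

definition rl :: "('a \<times> nat) list \<Rightarrow> 'a list" where
  "rl xs = concat (map (\<lambda>(c,n). replicate n c) xs)"

lemma rl_Nil[simp]: "rl [] = []" by (simp add: rl_def)
lemma rl_merge[simp]: "rl ((c,m)#(c,n)#xs) = rl ((c,m+n)#xs)" by (simp add: rl_def replicate_add)
lemma rl_zero[simp]: "rl ((c,0)#xs) = rl xs" by (simp add: rl_def)
lemma rl_append: "rl (xs @ ys) = rl xs @ rl ys" by (simp add: rl_def)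
lemma rl_concat: "rl (concat L) = concat (map rl L)" by (induction L) (auto simp: rl_append)

lemma concat_filter_ne: "concat (filter (\<lambda>B. B \<noteq> []) L) = concat L"
  by (induction L) auto

lemma bad_intro:
  assumes "rl (concat L) = w" "w \<noteq> []" "rl (concat (rev L)) = rl X @ f @ rl Y" "\<not> rich f"
  shows "\<not> (\<forall>v\<in>BR w. rich v)"
proof -
  define Bs where "Bs = filter (\<lambda>B. B \<noteq> []) (map rl L)"
  have c: "concat Bs = w" using assms(1) unfolding Bs_def rl_concat by (simp add: concat_filter_ne)
  have ne: "Bs \<noteq> []" using c assms(2) by auto
  have v: "concat (rev Bs) = rl X @ f @ rl Y"
    using assms(3) unfolding Bs_def rl_concat by (simp add: rev_filter concat_filter_ne rev_map)
  have "concat (rev Bs) \<in> BR w" unfolding BR_def using c ne by (auto simp: Bs_def)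
  moreover have "\<not> rich (concat (rev Bs))" using v not_rich_factor[OF assms(4)] by simp
  ultimately show ?thesis by blast
qed

fun prefs :: "'a list \<Rightarrow> 'a list list" where
  "prefs [] = [[]]"
| "prefs (x # xs) = [] # map ((#) x) (prefs xs)"

lemma set_prefs: "set (prefs xs) = {u. \<exists>q. xs = u @ q}"
  by (induction xs) (auto simp: Cons_eq_append_conv)

fun allfac :: "'a list \<Rightarrow> 'a list list" where
  "allfac [] = [[]]"
| "allfac (x # xs) = map ((#) x) (prefs xs) @ allfac xs"

lemma set_allfac: "set (allfac w) = factors w"
proof (induction w)
  case Nil then show ?case by (auto simp: factors_def)
next
  case (Cons x xs)
  have "factors (x # xs) = ((#) x) ` {u. \<exists>q. xs = u @ q} \<union> factors xs"
    unfolding factors_def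
    by (auto simp: Cons_eq_append_conv) (metis append_Cons append_Nil)+
  then show ?case using Cons by (simp add: set_prefs)
qed

definition richc :: "'a list \<Rightarrow> bool" where
  "richc w \<longleftrightarrow> length (remdups (filter (\<lambda>u. u \<noteq> [] \<and> rev u = u) (allfac w))) = length w"

lemma richc_rich: "richc w = rich w"
proof -
  have "set (filter (\<lambda>u. u \<noteq> [] \<and> rev u = u) (allfac w)) = PF w"
    by (auto simp: set_allfac PF_def palindrome_def)
  then show ?thesis unfolding richc_def rich_PF
    by (metis length_remdups_card_conv)
qed

fun parts :: "'a list \<Rightarrow> 'a list list list" where
  "parts [] = [[]]"
| "parts (x # xs) = concat (map (\<lambda>P. case P of [] \<Rightarrow> [[[x]]] | B # Bs \<Rightarrow> [[x] # B # Bs, (x # B) # Bs]) (parts xs))"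

lemma set_parts: "set (parts w) = {Bs. concat Bs = w \<and> (\<forall>B\<in>set Bs. B \<noteq> [])}"
proof (induction w)
  case Nil then show ?case by auto
next
  case (Cons x xs)
  show ?case
  proof
    show "set (parts (x # xs)) \<subseteq> {Bs. concat Bs = x # xs \<and> (\<forall>B\<in>set Bs. B \<noteq> [])}"
    proof
      fix Bs assume "Bs \<in> set (parts (x # xs))"
      then obtain P where P: "P \<in> set (parts xs)"
        and Bs: "Bs \<in> set (case P of [] \<Rightarrow> [[[x]]] | B # Bs \<Rightarrow> [[x] # B # Bs, (x # B) # Bs])"
        by auto
      have hP: "concat P = xs" "\<forall>B\<in>set P. B \<noteq> []" using P Cons.IH by auto
      show "Bs \<in> {Bs. concat Bs = x # xs \<and> (\<forall>B\<in>set Bs. B \<noteq> [])}"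
      proof (cases P)
        case Nil then show ?thesis using Bs hP by auto
      next
        case (Cons B Bs')
        then show ?thesis using Bs hP by auto
      qed
    qed
  next
    show "{Bs. concat Bs = x # xs \<and> (\<forall>B\<in>set Bs. B \<noteq> [])} \<subseteq> set (parts (x # xs))"
    proof
      fix Bs assume "Bs \<in> {Bs. concat Bs = x # xs \<and> (\<forall>B\<in>set Bs. B \<noteq> [])}"
      then have h: "concat Bs = x # xs" "\<forall>B\<in>set Bs. B \<noteq> []" by auto
      then obtain B1 rest where Bs: "Bs = B1 # rest" by (cases Bs) auto
      with h obtain B1' where B1: "B1 = x # B1'" by (cases B1) auto
      show "Bs \<in> set (parts (x # xs))"
      proof (cases B1')
        case Nil
        then have r: "rest \<in> set (parts xs)" using Cons h Bs B1 by auto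
        have "Bs \<in> set (case rest of [] \<Rightarrow> [[[x]]] | B # Bs \<Rightarrow> [[x] # B # Bs, (x # B) # Bs])"
          by (cases rest) (auto simp: Bs B1 Nil)
        then show ?thesis using r unfolding parts.simps set_concat set_map by blast
      next
        case (Cons y ys)
        then have r: "B1' # rest \<in> set (parts xs)" using Cons.IH h Bs B1 by auto
        have "Bs \<in> set (case B1' # rest of [] \<Rightarrow> [[[x]]] | B # Bs \<Rightarrow> [[x] # B # Bs, (x # B) # Bs])"
          by (auto simp: Bs B1)
        then show ?thesis using r unfolding parts.simps set_concat set_map by blast
      qed
    qed
  qed
qed

lemma BR_code: "w \<noteq> [] \<Longrightarrow> BR w = (\<lambda>Bs. concat (rev Bs)) ` set (parts w)"
  unfolding BR_def set_parts by auto

lemma all_rich_code: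
  "w \<noteq> [] \<Longrightarrow> list_all (\<lambda>Bs. richc (concat (rev Bs))) (parts w) \<Longrightarrow> \<forall>v\<in>BR w. rich v"
  unfolding BR_code by (auto simp: list_all_iff richc_rich)




lemma factI: "v = p @ u @ q \<Longrightarrow> u \<in> factors v"
  unfolding factors_def by blast

lemma PFI: "v = p @ u @ q \<Longrightarrow> u \<noteq> [] \<Longrightarrow> rev u = u \<Longrightarrow> u \<in> PF v"
  unfolding PF_def palindrome_def using factI by blast

lemma rep_split: "m \<le> n \<Longrightarrow> replicate n x = replicate (n - m) x @ replicate m x"
  by (metis le_add_diff_inverse2 replicate_add)

lemma rep_split2: "m \<le> n \<Longrightarrow> replicate n x = replicate m x @ replicate (n - m) x"
  by (metis le_add_diff_inverse replicate_add)

lemma rich_two: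
  fixes i j k :: nat
  defines "v \<equiv> replicate i False @ True # replicate j False @ True # replicate k False"
  shows "rich v"
proof -
  define M where "M = max i (max j k)"
  define X where "X = max (min i j) (min j k)"
  define Y where "Y = min i k"
  define A where "A = (\<lambda>m. replicate m False) ` {1..M}"
  define B where "B = {[True]}"
  define C where "C = (\<lambda>m. replicate m False @ True # replicate m False) ` {1..X}"
  define D where "D = (\<lambda>m. replicate m False @ True # replicate j False @ True # replicate m False) ` {0..Y}"
  have A: "A \<subseteq> PF v"
  proof
    fix u assume "u \<in> A"
    then obtain m where m: "1 \<le> m" "m \<le> M" "u = replicate m False" unfolding A_def by auto
    have "u \<in> factors v"
    proof -
      consider "m \<le> i" | "m \<le> j" | "m \<le> k" using m(2) unfolding M_def by linarith
      then show ?thesis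
      proof cases
        case 1
        then have "v = replicate (i - m) False @ u @ (True # replicate j False @ True # replicate k False)"
          unfolding v_def m(3) using rep_split[OF 1, of False] by simp
        then show ?thesis by (rule factI)
      next
        case 2
        then have "v = (replicate i False @ [True] @ replicate (j - m) False) @ u @ (True # replicate k False)"
          unfolding v_def m(3) using rep_split[OF 2, of False] by simp
        then show ?thesis by (rule factI)
      next
        case 3
        then have "v = (replicate i False @ True # replicate j False @ [True] @ replicate (k - m) False) @ u @ []"
          unfolding v_def m(3) using rep_split[OF 3, of False] by simp
        then show ?thesis by (rule factI)
      qed
    qed
    moreover have "u \<noteq> []" "rev u = u" using m by auto
    ultimately show "u \<in> PF v" unfolding PF_def palindrome_def by auto
  qed
  have B: "B \<subseteq> PF v"
  proof -
    have "v = replicate i False @ [True] @ (replicate j False @ True # replicate k False)"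
      unfolding v_def by simp
    then have "[True] \<in> PF v" by (rule PFI) auto
    then show ?thesis unfolding B_def by auto
  qed
  have C: "C \<subseteq> PF v"
  proof
    fix u assume "u \<in> C"
    then obtain m where m: "1 \<le> m" "m \<le> X" "u = replicate m False @ True # replicate m False"
      unfolding C_def by auto
    have "rev u = u" using m(3) by simp
    moreover have "u \<noteq> []" using m(3) by simp
    moreover have "\<exists>p q. v = p @ u @ q"
    proof -
      consider "m \<le> i" "m \<le> j" | "m \<le> j" "m \<le> k" using m(2) unfolding X_def by linarith
      then show ?thesis
      proof cases
        case 1
        then have "v = replicate (i - m) False @ u @ (replicate (j - m) False @ True # replicate k False)"
          unfolding v_def m(3) using rep_split[OF 1(1), of False] rep_split2[OF 1(2), of False] by simp
        then show ?thesis by blast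
      next
        case 2
        then have "v = (replicate i False @ True # replicate (j - m) False) @ u @ replicate (k - m) False"
          unfolding v_def m(3) using rep_split[OF 2(1), of False] rep_split2[OF 2(2), of False] by simp
        then show ?thesis by blast
      qed
    qed
    ultimately show "u \<in> PF v" using PFI by blast
  qed
  have D: "D \<subseteq> PF v"
  proof
    fix u assume "u \<in> D"
    then obtain m where m: "m \<le> Y" "u = replicate m False @ True # replicate j False @ True # replicate m False"
      unfolding D_def by auto
    have mm: "m \<le> i" "m \<le> k" using m(1) unfolding Y_def by auto
    have "rev u = u" using m(2) by simp
    moreover have "u \<noteq> []" using m(2) by simp
    moreover have "v = replicate (i - m) False @ u @ replicate (k - m) False"
      unfolding v_def m(2) using rep_split[OF mm(1), of False] rep_split2[OF mm(2), of False] by simp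
    ultimately show "u \<in> PF v" using PFI by blast
  qed
  have fin: "finite A" "finite B" "finite C" "finite D" unfolding A_def B_def C_def D_def by auto
  have cA: "card A = M" unfolding A_def
    by (subst card_image) (auto intro: inj_onI dest: arg_cong[where f=length])
  have cB: "card B = 1" unfolding B_def by simp
  have cC: "card C = X" unfolding C_def
    by (subst card_image) (auto intro!: inj_onI dest: arg_cong[where f=length])
  have cD: "card D = Y + 1" unfolding D_def
    by (subst card_image) (auto intro!: inj_onI dest: arg_cong[where f=length])
  have cnt: "\<And>u. u \<in> A \<Longrightarrow> count_list u True = 0" "\<And>u. u \<in> B \<Longrightarrow> count_list u True = 1"
     "\<And>u. u \<in> C \<Longrightarrow> count_list u True = 1" "\<And>u. u \<in> D \<Longrightarrow> count_list u True = 2"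
    unfolding A_def B_def C_def D_def by (auto simp: count_list_append)
  have lBC: "\<And>u. u \<in> B \<Longrightarrow> length u = 1" "\<And>u. u \<in> C \<Longrightarrow> length u \<ge> 3"
    unfolding B_def C_def by auto
  have d1: "C \<inter> D = {}" using cnt(3,4) by fastforce
  have d2: "B \<inter> (C \<union> D) = {}" using cnt(2,4) lBC by fastforce
  have d3: "A \<inter> (B \<union> (C \<union> D)) = {}" using cnt by fastforce
  have "card (A \<union> (B \<union> (C \<union> D))) = M + (1 + (X + (Y + 1)))"
    using fin d1 d2 d3 cA cB cC cD by (simp add: card_Un_disjoint)
  also have "\<dots> = length v"
    unfolding v_def M_def X_def Y_def
    by (cases "i \<le> j"; cases "j \<le> k"; cases "i \<le> k"; simp add: max_def min_def)
  finally have "length v \<le> card (PF v)"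
    using card_mono[OF finite_PF, of "A \<union> (B \<union> (C \<union> D))" v] A B C D by auto
  then show ?thesis unfolding rich_PF using card_PF_le[of v] by simp
qed

lemma count0: "count_list (v::bool list) True = 0 \<Longrightarrow> v = replicate (length v) False"
  by (induction v) (auto split: if_splits)

lemma count1: "count_list (v::bool list) True = 1 \<Longrightarrow> \<exists>i k. v = replicate i False @ True # replicate k False"
proof (induction v)
  case Nil then show ?case by simp
next
  case (Cons x v)
  show ?case
  proof (cases x)
    case True
    then have "count_list v True = 0" using Cons.prems by simp
    then have "v = replicate (length v) False" by (rule count0)
    then show ?thesis using True by (intro exI[of _ 0] exI[of _ "length v"]) simp
  next
    case False
    then have "count_list v True = 1" using Cons.prems by simp
    then obtain i k where "v = replicate i False @ True # replicate k False" using Cons.IH by blast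
    then show ?thesis using False by (intro exI[of _ "Suc i"] exI[of _ k]) simp
  qed
qed

lemma count2: "count_list (v::bool list) True = 2 \<Longrightarrow>
   \<exists>i j k. v = replicate i False @ True # replicate j False @ True # replicate k False"
proof (induction v)
  case Nil then show ?case by simp
next
  case (Cons x v)
  show ?case
  proof (cases x)
    case True
    then have "count_list v True = 1" using Cons.prems by simp
    then obtain j k where "v = replicate j False @ True # replicate k False" using count1 by blast
    then show ?thesis using True by (intro exI[of _ 0] exI[of _ j] exI[of _ k]) simp
  next
    case False
    then have "count_list v True = 2" using Cons.prems by simp
    then obtain i j k where "v = replicate i False @ True # replicate j False @ True # replicate k False"
      using Cons.IH by blast
    then show ?thesis using False by (intro exI[of _ "Suc i"] exI[of _ j] exI[of _ k]) simp
  qed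
qed

lemma count_concat: "count_list (concat L) x = sum_list (map (\<lambda>B. count_list B x) L)"
  by (induction L) (auto simp: count_list_append)

lemma count_BR: "v \<in> BR w \<Longrightarrow> count_list v x = count_list w x"
  unfolding BR_def by (auto simp: count_concat rev_map[symmetric] sum_list_rev)

lemma two_true_BR: "count_list (w::bool list) True = 2 \<Longrightarrow> \<forall>v\<in>BR w. rich v"
proof
  fix v assume "count_list w True = 2" "v \<in> BR w"
  then have "count_list v True = 2" using count_BR by metis
  then obtain i j k where "v = replicate i False @ True # replicate j False @ True # replicate k False"
    using count2 by blast
  then show "rich v" using rich_two by simp
qed

lemma count_map_Not: "count_list (map Not v) True = count_list v False"
  by (induction v) auto

lemma two_false_BR: "count_list (w::bool list) False = 2 \<Longrightarrow> \<forall>v\<in>BR w. rich v"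
proof -
  assume "count_list w False = 2"
  then have "\<forall>v\<in>BR (map Not w). rich v" using two_true_BR count_map_Not by metis
  then show ?thesis using BR_rich_map[of Not w] by (simp add: inj_def)
qed



fun mrg :: "('a \<times> nat) list \<Rightarrow> ('a \<times> nat) list" where
  "mrg [] = []"
| "mrg [x] = [x]"
| "mrg ((c,m) # (d,n) # xs) = (if c = d then mrg ((c, m + n) # xs) else (c, m) # mrg ((d, n) # xs))"

lemma rl_Cons: "rl ((c,n) # xs) = replicate n c @ rl xs" by (simp add: rl_def)

lemma rl_mrg: "rl (mrg xs) = rl xs"
  by (induction xs rule: mrg.induct) (auto simp: rl_Cons replicate_add)

lemma bad_intro3:
  assumes "mrg (concat L) = mrg W" "rl W \<noteq> []" "mrg (concat (rev L)) = mrg (X @ Fr @ Y)" "\<not> rich (rl Fr)"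
  shows "\<not> (\<forall>v\<in>BR (rl W). rich v)"
proof -
  have 1: "rl (concat L) = rl W" using arg_cong[OF assms(1), of rl] by (simp add: rl_mrg)
  have 3: "rl (concat (rev L)) = rl X @ rl Fr @ rl Y" using arg_cong[OF assms(3), of rl] by (simp add: rl_mrg rl_append)
  show ?thesis by (rule bad_intro[OF 1 assms(2) 3 assms(4)])
qed

lemma nr0: "\<not> rich (rl [(True, 2), (False, 1), (True, 1), (False, 2), (True, 2)])"
  unfolding richc_rich[symmetric] rl_def by code_simp

lemma nr1: "\<not> rich (rl [(True, 2), (False, 1), (True, 1), (False, 3), (True, 2)])"
  unfolding richc_rich[symmetric] rl_def by code_simp

lemma nr2: "\<not> rich (rl [(True, 2), (False, 2), (True, 1), (False, 1), (True, 2)])"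
  unfolding richc_rich[symmetric] rl_def by code_simp

lemma nr3: "\<not> rich (rl [(True, 2), (False, 3), (True, 1), (False, 1), (True, 2)])"
  unfolding richc_rich[symmetric] rl_def by code_simp

lemma nr4: "\<not> rich (rl [(False, 2), (True, 3), (False, 1), (True, 1), (False, 2)])"
  unfolding richc_rich[symmetric] rl_def by code_simp

lemma nr5: "\<not> rich (rl [(False, 2), (True, 2), (False, 1), (True, 1), (False, 2)])"
  unfolding richc_rich[symmetric] rl_def by code_simp

lemma nr6: "\<not> rich (rl [(False, 2), (True, 1), (False, 1), (True, 3), (False, 2)])"
  unfolding richc_rich[symmetric] rl_def by code_simp

lemma nr7: "\<not> rich (rl [(False, 2), (True, 1), (False, 1), (True, 2), (False, 2)])"
  unfolding richc_rich[symmetric] rl_def by code_simp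

lemma cell0: "\<not> (\<forall>v\<in>BR (rl [(True, 1), (False, 1), (True, 2), (False, s' + 4)]). rich v)"
  apply (rule bad_intro3[where L="[[(True, 1), (False, 1), (True, 2), (False, 2)], [(False, s' + 2)]]" and X="[(False, s')]" and Y="[(False, 0)]" and Fr="[(False, 2), (True, 1), (False, 1), (True, 2), (False, 2)]"])
  apply simp
  apply (simp add: rl_Cons)
  apply simp
  by (rule nr7)

lemma cell1: "\<not> (\<forall>v\<in>BR (rl [(True, 1), (False, 1), (True, 3), (False, s' + 4)]). rich v)"
  apply (rule bad_intro3[where L="[[(True, 1), (False, 1), (True, 3), (False, 2)], [(False, s' + 2)]]" and X="[(False, s')]" and Y="[(False, 0)]" and Fr="[(False, 2), (True, 1), (False, 1), (True, 3), (False, 2)]"])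
  apply simp
  apply (simp add: rl_Cons)
  apply simp
  by (rule nr6)

lemma cell2: "\<not> (\<forall>v\<in>BR (rl [(True, 1), (False, 1), (True, r' + 4), (False, s' + 2)]). rich v)"
  apply (rule bad_intro3[where L="[[(True, 1), (False, 1), (True, 2)], [(True, r' + 2), (False, 2)], [(False, s')]]" and X="[(False, s'), (True, r')]" and Y="[(True, 0)]" and Fr="[(True, 2), (False, 2), (True, 1), (False, 1), (True, 2)]"])
  apply simp
  apply (simp add: rl_Cons)
  apply simp
  by (rule nr2)

lemma cell3: "\<not> (\<forall>v\<in>BR (rl [(True, 1), (False, 2), (True, 2), (False, s' + 3)]). rich v)"
  apply (rule bad_intro3[where L="[[(True, 1), (False, 2)], [(True, 2), (False, 1)], [(False, s' + 2)]]" and X="[(False, s')]" and Y="[(False, 0)]" and Fr="[(False, 2), (True, 2), (False, 1), (True, 1), (False, 2)]"])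
  apply simp
  apply (simp add: rl_Cons)
  apply simp
  by (rule nr5)

lemma cell4: "\<not> (\<forall>v\<in>BR (rl [(True, 1), (False, 2), (True, 3), (False, s' + 3)]). rich v)"
  apply (rule bad_intro3[where L="[[(True, 1), (False, 2)], [(True, 3), (False, 1)], [(False, s' + 2)]]" and X="[(False, s')]" and Y="[(False, 0)]" and Fr="[(False, 2), (True, 3), (False, 1), (True, 1), (False, 2)]"])
  apply simp
  apply (simp add: rl_Cons)
  apply simp
  by (rule nr4)

lemma cell5: "\<not> (\<forall>v\<in>BR (rl [(True, 1), (False, 2), (True, r' + 4), (False, s' + 1)]). rich v)"
  apply (rule bad_intro3[where L="[[(True, 1), (False, 2), (True, 2)], [(True, r' + 2), (False, 1)], [(False, s')]]" and X="[(False, s'), (True, r')]" and Y="[(True, 0)]" and Fr="[(True, 2), (False, 1), (True, 1), (False, 2), (True, 2)]"])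
  apply simp
  apply (simp add: rl_Cons)
  apply simp
  by (rule nr0)

lemma cell6: "\<not> (\<forall>v\<in>BR (rl [(True, 1), (False, 3), (True, r' + 4), (False, 1)]). rich v)"
  apply (rule bad_intro3[where L="[[(True, 1), (False, 3), (True, 2)], [(True, r' + 2), (False, 1)]]" and X="[(True, r')]" and Y="[(True, 0)]" and Fr="[(True, 2), (False, 1), (True, 1), (False, 3), (True, 2)]"])
  apply simp
  apply (simp add: rl_Cons)
  apply simp
  by (rule nr1)

lemma cell7: "\<not> (\<forall>v\<in>BR (rl [(True, 1), (False, 3), (True, r' + 2), (False, s' + 2)]). rich v)"
  apply (rule bad_intro3[where L="[[(True, 1), (False, 2)], [(False, 1)], [(True, 2)], [(True, r'), (False, s' + 2)]]" and X="[(True, r'), (False, s')]" and Y="[(False, 0)]" and Fr="[(False, 2), (True, 2), (False, 1), (True, 1), (False, 2)]"])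
  apply simp
  apply (simp add: rl_Cons)
  apply simp
  by (rule nr5)

lemma cell8: "\<not> (\<forall>v\<in>BR (rl [(True, 1), (False, q' + 4), (True, r' + 2), (False, s' + 1)]). rich v)"
  apply (rule bad_intro3[where L="[[(True, 1), (False, q' + 2)], [(False, 1)], [(False, 1), (True, 2)], [(True, r'), (False, s' + 1)]]" and X="[(True, r'), (False, s')]" and Y="[(False, q')]" and Fr="[(False, 2), (True, 2), (False, 1), (True, 1), (False, 2)]"])
  apply simp
  apply (simp add: rl_Cons)
  apply simp
  by (rule nr5)

lemma cell9: "\<not> (\<forall>v\<in>BR (rl [(True, 2), (False, 1), (True, 1), (False, s' + 4)]). rich v)"
  apply (rule bad_intro3[where L="[[(True, 2), (False, 1), (True, 1), (False, 2)], [(False, s' + 2)]]" and X="[(False, s')]" and Y="[(False, 0)]" and Fr="[(False, 2), (True, 2), (False, 1), (True, 1), (False, 2)]"])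
  apply simp
  apply (simp add: rl_Cons)
  apply simp
  by (rule nr5)

lemma cell10: "\<not> (\<forall>v\<in>BR (rl [(True, 2), (False, 1), (True, 2), (False, s' + 4)]). rich v)"
  apply (rule bad_intro3[where L="[[(True, 1)], [(True, 1), (False, 1), (True, 2), (False, 2)], [(False, s' + 2)]]" and X="[(False, s')]" and Y="[(False, 0), (True, 1)]" and Fr="[(False, 2), (True, 1), (False, 1), (True, 2), (False, 2)]"])
  apply simp
  apply (simp add: rl_Cons)
  apply simp
  by (rule nr7)

lemma cell11: "\<not> (\<forall>v\<in>BR (rl [(True, 2), (False, 1), (True, r' + 3), (False, s' + 2)]). rich v)"
  apply (rule bad_intro3[where L="[[(True, 1)], [(True, 1), (False, 1), (True, 1)], [(True, r' + 2), (False, 2)], [(False, s')]]" and X="[(False, s'), (True, r')]" and Y="[(True, 0)]" and Fr="[(True, 2), (False, 2), (True, 1), (False, 1), (True, 2)]"])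
  apply simp
  apply (simp add: rl_Cons)
  apply simp
  by (rule nr2)

lemma cell12: "\<not> (\<forall>v\<in>BR (rl [(True, 3), (False, 1), (True, 1), (False, s' + 4)]). rich v)"
  apply (rule bad_intro3[where L="[[(True, 3), (False, 1), (True, 1), (False, 2)], [(False, s' + 2)]]" and X="[(False, s')]" and Y="[(False, 0)]" and Fr="[(False, 2), (True, 3), (False, 1), (True, 1), (False, 2)]"])
  apply simp
  apply (simp add: rl_Cons)
  apply simp
  by (rule nr4)

lemma cell13: "\<not> (\<forall>v\<in>BR (rl [(True, p' + 4), (False, 1), (True, 1), (False, s' + 2)]). rich v)"
  apply (rule bad_intro3[where L="[[(True, 2)], [(True, p' + 2), (False, 1), (True, 1), (False, 2)], [(False, s')]]" and X="[(False, s'), (True, p')]" and Y="[(True, 0)]" and Fr="[(True, 2), (False, 1), (True, 1), (False, 2), (True, 2)]"])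
  apply simp
  apply (simp add: rl_Cons)
  apply simp
  by (rule nr0)

lemma cell14: "\<not> (\<forall>v\<in>BR (rl [(True, p' + 3), (False, 1), (True, r' + 2), (False, s' + 2)]). rich v)"
  apply (rule bad_intro3[where L="[[(True, p' + 2)], [(True, 1), (False, 1)], [(True, r' + 2), (False, 2)], [(False, s')]]" and X="[(False, s'), (True, r')]" and Y="[(True, p')]" and Fr="[(True, 2), (False, 2), (True, 1), (False, 1), (True, 2)]"])
  apply simp
  apply (simp add: rl_Cons)
  apply simp
  by (rule nr2)

lemma cell15: "\<not> (\<forall>v\<in>BR (rl [(True, 2), (False, 2), (True, 1), (False, s' + 3)]). rich v)"
  apply (rule bad_intro3[where L="[[(True, 2), (False, 2)], [(True, 1), (False, 1)], [(False, s' + 2)]]" and X="[(False, s')]" and Y="[(False, 0)]" and Fr="[(False, 2), (True, 1), (False, 1), (True, 2), (False, 2)]"])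
  apply simp
  apply (simp add: rl_Cons)
  apply simp
  by (rule nr7)

lemma cell16: "\<not> (\<forall>v\<in>BR (rl [(True, 2), (False, 2), (True, 2), (False, s' + 3)]). rich v)"
  apply (rule bad_intro3[where L="[[(True, 2), (False, 2), (True, 1)], [(True, 1), (False, 1)], [(False, s' + 2)]]" and X="[(False, s')]" and Y="[(False, 0), (True, 1)]" and Fr="[(False, 2), (True, 1), (False, 1), (True, 2), (False, 2)]"])
  apply simp
  apply (simp add: rl_Cons)
  apply simp
  by (rule nr7)

lemma cell17: "\<not> (\<forall>v\<in>BR (rl [(True, 2), (False, 2), (True, r' + 3), (False, s' + 1)]). rich v)"
  apply (rule bad_intro3[where L="[[(True, 1)], [(True, 1), (False, 2), (True, 1)], [(True, r' + 2), (False, 1)], [(False, s')]]" and X="[(False, s'), (True, r')]" and Y="[(True, 0)]" and Fr="[(True, 2), (False, 1), (True, 1), (False, 2), (True, 2)]"])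
  apply simp
  apply (simp add: rl_Cons)
  apply simp
  by (rule nr0)

lemma cell18: "\<not> (\<forall>v\<in>BR (rl [(True, 3), (False, 2), (True, 1), (False, s' + 3)]). rich v)"
  apply (rule bad_intro3[where L="[[(True, 3), (False, 2)], [(True, 1), (False, 1)], [(False, s' + 2)]]" and X="[(False, s')]" and Y="[(False, 0)]" and Fr="[(False, 2), (True, 1), (False, 1), (True, 3), (False, 2)]"])
  apply simp
  apply (simp add: rl_Cons)
  apply simp
  by (rule nr6)

lemma cell19: "\<not> (\<forall>v\<in>BR (rl [(True, p' + 4), (False, 2), (True, 1), (False, s' + 1)]). rich v)"
  apply (rule bad_intro3[where L="[[(True, 2)], [(True, p' + 2), (False, 2), (True, 1), (False, 1)], [(False, s')]]" and X="[(False, s'), (True, p')]" and Y="[(True, 0)]" and Fr="[(True, 2), (False, 2), (True, 1), (False, 1), (True, 2)]"])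
  apply simp
  apply (simp add: rl_Cons)
  apply simp
  by (rule nr2)

lemma cell20: "\<not> (\<forall>v\<in>BR (rl [(True, p' + 3), (False, 2), (True, r' + 2), (False, s' + 1)]). rich v)"
  apply (rule bad_intro3[where L="[[(True, p' + 2)], [(True, 1), (False, 2)], [(True, r' + 2), (False, 1)], [(False, s')]]" and X="[(False, s'), (True, r')]" and Y="[(True, p')]" and Fr="[(True, 2), (False, 1), (True, 1), (False, 2), (True, 2)]"])
  apply simp
  apply (simp add: rl_Cons)
  apply simp
  by (rule nr0)

lemma cell21: "\<not> (\<forall>v\<in>BR (rl [(True, 2), (False, 3), (True, r' + 3), (False, 1)]). rich v)"
  apply (rule bad_intro3[where L="[[(True, 1)], [(True, 1), (False, 3), (True, 1)], [(True, r' + 2), (False, 1)]]" and X="[(True, r')]" and Y="[(True, 0)]" and Fr="[(True, 2), (False, 1), (True, 1), (False, 3), (True, 2)]"])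
  apply simp
  apply (simp add: rl_Cons)
  apply simp
  by (rule nr1)

lemma cell22: "\<not> (\<forall>v\<in>BR (rl [(True, p' + 4), (False, 3), (True, 1), (False, 1)]). rich v)"
  apply (rule bad_intro3[where L="[[(True, 2)], [(True, p' + 2), (False, 3), (True, 1), (False, 1)]]" and X="[(True, p')]" and Y="[(True, 0)]" and Fr="[(True, 2), (False, 3), (True, 1), (False, 1), (True, 2)]"])
  apply simp
  apply (simp add: rl_Cons)
  apply simp
  by (rule nr3)

lemma cell23: "\<not> (\<forall>v\<in>BR (rl [(True, p' + 3), (False, 3), (True, r' + 2), (False, 1)]). rich v)"
  apply (rule bad_intro3[where L="[[(True, p' + 2)], [(True, 1), (False, 3)], [(True, r' + 2), (False, 1)]]" and X="[(True, r')]" and Y="[(True, p')]" and Fr="[(True, 2), (False, 1), (True, 1), (False, 3), (True, 2)]"])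
  apply simp
  apply (simp add: rl_Cons)
  apply simp
  by (rule nr1)

lemma cell24: "\<not> (\<forall>v\<in>BR (rl [(True, p' + 2), (False, 3), (True, r' + 1), (False, s' + 2)]). rich v)"
  apply (rule bad_intro3[where L="[[(True, p')], [(True, 2), (False, 2)], [(False, 1)], [(True, 1)], [(True, r'), (False, s' + 2)]]" and X="[(True, r'), (False, s')]" and Y="[(False, 0), (True, p')]" and Fr="[(False, 2), (True, 1), (False, 1), (True, 2), (False, 2)]"])
  apply simp
  apply (simp add: rl_Cons)
  apply simp
  by (rule nr7)

lemma cell25: "\<not> (\<forall>v\<in>BR (rl [(True, p' + 2), (False, q' + 4), (True, r' + 1), (False, s' + 1)]). rich v)"
  apply (rule bad_intro3[where L="[[(True, p')], [(True, 2), (False, q' + 2)], [(False, 1)], [(False, 1), (True, 1)], [(True, r'), (False, s' + 1)]]" and X="[(True, r'), (False, s')]" and Y="[(False, q'), (True, p')]" and Fr="[(False, 2), (True, 1), (False, 1), (True, 2), (False, 2)]"])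
  apply simp
  apply (simp add: rl_Cons)
  apply simp
  by (rule nr7)




lemma S0: "\<forall>v\<in>BR (replicate 3 True @ replicate 3 False @ replicate 1 True @ replicate 1 False). rich v"
  by (rule all_rich_code) code_simp+

lemma S1: "\<forall>v\<in>BR (replicate 3 True @ replicate 2 False @ replicate 1 True @ replicate 2 False). rich v"
  by (rule all_rich_code) code_simp+

lemma S2: "\<forall>v\<in>BR (replicate 3 True @ replicate 1 False @ replicate 1 True @ replicate 3 False). rich v"
  by (rule all_rich_code) code_simp+

lemma S3: "\<forall>v\<in>BR (replicate 2 True @ replicate 3 False @ replicate 2 True @ replicate 1 False). rich v"
  by (rule all_rich_code) code_simp+

lemma S4: "\<forall>v\<in>BR (replicate 2 True @ replicate 2 False @ replicate 2 True @ replicate 2 False). rich v"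
  by (rule all_rich_code) code_simp+

lemma S5: "\<forall>v\<in>BR (replicate 2 True @ replicate 1 False @ replicate 2 True @ replicate 3 False). rich v"
  by (rule all_rich_code) code_simp+

lemma S6: "\<forall>v\<in>BR (replicate 1 True @ replicate 3 False @ replicate 3 True @ replicate 1 False). rich v"
  by (rule all_rich_code) code_simp+

lemma S7: "\<forall>v\<in>BR (replicate 1 True @ replicate 2 False @ replicate 3 True @ replicate 2 False). rich v"
  by (rule all_rich_code) code_simp+

lemma S8: "\<forall>v\<in>BR (replicate 1 True @ replicate 1 False @ replicate 3 True @ replicate 3 False). rich v"
  by (rule all_rich_code) code_simp+

lemma core_bad:
  fixes p q r s :: nat
  assumes b: "1 \<le> p" "1 \<le> q" "1 \<le> r" "1 \<le> s" "8 \<le> p + q + r + s"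
    and g1: "\<not> (p = 1 \<and> r = 1)" and g2: "\<not> (q = 1 \<and> s = 1)"
    and g3: "\<not> ((p = 3 \<and> r = 1 \<or> p = 2 \<and> r = 2 \<or> p = 1 \<and> r = 3) \<and> (q = 3 \<and> s = 1 \<or> q = 2 \<and> s = 2 \<or> q = 1 \<and> s = 3))"
  shows "\<not> (\<forall>v\<in>BR (rl [(True, p), (False, q), (True, r), (False, s)]). rich v)"
proof -
  show ?thesis
  proof (cases "p = 1")
    assume h1: "p = 1"
    show ?thesis
    proof (cases "q = 1")
      assume h2: "q = 1"
      show ?thesis
      proof (cases "r = 1")
        assume h3: "r = 1"
        show ?thesis using b g1 g2 g3 h1 h2 h3 by auto
      next
        assume h3: "r \<noteq> 1"
        show ?thesis
        proof (cases "r = 2")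
          assume h4: "r = 2"
          show ?thesis
          proof (cases "s = 1")
            assume h5: "s = 1"
            show ?thesis using b g1 g2 g3 h1 h2 h3 h4 h5 by auto
          next
            assume h5: "s \<noteq> 1"
            show ?thesis
            proof (cases "s = 2")
              assume h6: "s = 2"
              show ?thesis using b g1 g2 g3 h1 h2 h3 h4 h5 h6 by auto
            next
              assume h6: "s \<noteq> 2"
              show ?thesis
              proof (cases "s = 3")
                assume h7: "s = 3"
                show ?thesis using b g1 g2 g3 h1 h2 h3 h4 h5 h6 h7 by auto
              next
                assume h7: "s \<noteq> 3"
                have "s - 4 + 4 = s" using b g1 g2 g3 h1 h2 h3 h4 h5 h6 h7 by linarith+
                then show ?thesis using cell0[where s'="s - 4"] b g1 g2 g3 h1 h2 h3 h4 h5 h6 h7 by simp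
              qed
            qed
          qed
        next
          assume h4: "r \<noteq> 2"
          show ?thesis
          proof (cases "r = 3")
            assume h8: "r = 3"
            show ?thesis
            proof (cases "s = 1")
              assume h9: "s = 1"
              show ?thesis using b g1 g2 g3 h1 h2 h3 h4 h8 h9 by auto
            next
              assume h9: "s \<noteq> 1"
              show ?thesis
              proof (cases "s = 2")
                assume h10: "s = 2"
                show ?thesis using b g1 g2 g3 h1 h2 h3 h4 h8 h9 h10 by auto
              next
                assume h10: "s \<noteq> 2"
                show ?thesis
                proof (cases "s = 3")
                  assume h11: "s = 3"
                  show ?thesis using b g1 g2 g3 h1 h2 h3 h4 h8 h9 h10 h11 by auto
                next
                  assume h11: "s \<noteq> 3"
                  have "s - 4 + 4 = s" using b g1 g2 g3 h1 h2 h3 h4 h8 h9 h10 h11 by linarith+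
                  then show ?thesis using cell1[where s'="s - 4"] b g1 g2 g3 h1 h2 h3 h4 h8 h9 h10 h11 by simp
                qed
              qed
            qed
          next
            assume h8: "r \<noteq> 3"
            show ?thesis
            proof (cases "s = 1")
              assume h12: "s = 1"
              show ?thesis using b g1 g2 g3 h1 h2 h3 h4 h8 h12 by auto
            next
              assume h12: "s \<noteq> 1"
              have "r - 4 + 4 = r" "s - 2 + 2 = s" using b g1 g2 g3 h1 h2 h3 h4 h8 h12 by linarith+
              then show ?thesis using cell2[where r'="r - 4" and s'="s - 2"] b g1 g2 g3 h1 h2 h3 h4 h8 h12 by simp
            qed
          qed
        qed
      qed
    next
      assume h2: "q \<noteq> 1"
      show ?thesis
      proof (cases "q = 2")
        assume h13: "q = 2"
        show ?thesis
        proof (cases "r = 1")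
          assume h14: "r = 1"
          show ?thesis using b g1 g2 g3 h1 h2 h13 h14 by auto
        next
          assume h14: "r \<noteq> 1"
          show ?thesis
          proof (cases "r = 2")
            assume h15: "r = 2"
            show ?thesis
            proof (cases "s = 1")
              assume h16: "s = 1"
              show ?thesis using b g1 g2 g3 h1 h2 h13 h14 h15 h16 by auto
            next
              assume h16: "s \<noteq> 1"
              show ?thesis
              proof (cases "s = 2")
                assume h17: "s = 2"
                show ?thesis using b g1 g2 g3 h1 h2 h13 h14 h15 h16 h17 by auto
              next
                assume h17: "s \<noteq> 2"
                have "s - 3 + 3 = s" using b g1 g2 g3 h1 h2 h13 h14 h15 h16 h17 by linarith+
                then show ?thesis using cell3[where s'="s - 3"] b g1 g2 g3 h1 h2 h13 h14 h15 h16 h17 by simp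
              qed
            qed
          next
            assume h15: "r \<noteq> 2"
            show ?thesis
            proof (cases "r = 3")
              assume h18: "r = 3"
              show ?thesis
              proof (cases "s = 1")
                assume h19: "s = 1"
                show ?thesis using b g1 g2 g3 h1 h2 h13 h14 h15 h18 h19 by auto
              next
                assume h19: "s \<noteq> 1"
                show ?thesis
                proof (cases "s = 2")
                  assume h20: "s = 2"
                  show ?thesis using b g1 g2 g3 h1 h2 h13 h14 h15 h18 h19 h20 by auto
                next
                  assume h20: "s \<noteq> 2"
                  have "s - 3 + 3 = s" using b g1 g2 g3 h1 h2 h13 h14 h15 h18 h19 h20 by linarith+
                  then show ?thesis using cell4[where s'="s - 3"] b g1 g2 g3 h1 h2 h13 h14 h15 h18 h19 h20 by simp
                qed
              qed
            next
              assume h18: "r \<noteq> 3"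
              have "r - 4 + 4 = r" "s - 1 + 1 = s" using b g1 g2 g3 h1 h2 h13 h14 h15 h18 by linarith+
              then show ?thesis using cell5[where r'="r - 4" and s'="s - 1"] b g1 g2 g3 h1 h2 h13 h14 h15 h18 by simp
            qed
          qed
        qed
      next
        assume h13: "q \<noteq> 2"
        show ?thesis
        proof (cases "q = 3")
          assume h21: "q = 3"
          show ?thesis
          proof (cases "r = 1")
            assume h22: "r = 1"
            show ?thesis using b g1 g2 g3 h1 h2 h13 h21 h22 by auto
          next
            assume h22: "r \<noteq> 1"
            show ?thesis
            proof (cases "s = 1")
              assume h23: "s = 1"
              show ?thesis
              proof (cases "r = 2")
                assume h24: "r = 2"
                show ?thesis using b g1 g2 g3 h1 h2 h13 h21 h22 h23 h24 by auto
              next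
                assume h24: "r \<noteq> 2"
                show ?thesis
                proof (cases "r = 3")
                  assume h25: "r = 3"
                  show ?thesis using b g1 g2 g3 h1 h2 h13 h21 h22 h23 h24 h25 by auto
                next
                  assume h25: "r \<noteq> 3"
                  have "r - 4 + 4 = r" using b g1 g2 g3 h1 h2 h13 h21 h22 h23 h24 h25 by linarith+
                  then show ?thesis using cell6[where r'="r - 4"] b g1 g2 g3 h1 h2 h13 h21 h22 h23 h24 h25 by simp
                qed
              qed
            next
              assume h23: "s \<noteq> 1"
              have "r - 2 + 2 = r" "s - 2 + 2 = s" using b g1 g2 g3 h1 h2 h13 h21 h22 h23 by linarith+
              then show ?thesis using cell7[where r'="r - 2" and s'="s - 2"] b g1 g2 g3 h1 h2 h13 h21 h22 h23 by simp
            qed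
          qed
        next
          assume h21: "q \<noteq> 3"
          show ?thesis
          proof (cases "r = 1")
            assume h26: "r = 1"
            show ?thesis using b g1 g2 g3 h1 h2 h13 h21 h26 by auto
          next
            assume h26: "r \<noteq> 1"
            have "q - 4 + 4 = q" "r - 2 + 2 = r" "s - 1 + 1 = s" using b g1 g2 g3 h1 h2 h13 h21 h26 by linarith+
            then show ?thesis using cell8[where q'="q - 4" and r'="r - 2" and s'="s - 1"] b g1 g2 g3 h1 h2 h13 h21 h26 by simp
          qed
        qed
      qed
    qed
  next
    assume h1: "p \<noteq> 1"
    show ?thesis
    proof (cases "q = 1")
      assume h27: "q = 1"
      show ?thesis
      proof (cases "p = 2")
        assume h28: "p = 2"
        show ?thesis
        proof (cases "r = 1")
          assume h29: "r = 1"
          show ?thesis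
          proof (cases "s = 1")
            assume h30: "s = 1"
            show ?thesis using b g1 g2 g3 h1 h27 h28 h29 h30 by auto
          next
            assume h30: "s \<noteq> 1"
            show ?thesis
            proof (cases "s = 2")
              assume h31: "s = 2"
              show ?thesis using b g1 g2 g3 h1 h27 h28 h29 h30 h31 by auto
            next
              assume h31: "s \<noteq> 2"
              show ?thesis
              proof (cases "s = 3")
                assume h32: "s = 3"
                show ?thesis using b g1 g2 g3 h1 h27 h28 h29 h30 h31 h32 by auto
              next
                assume h32: "s \<noteq> 3"
                have "s - 4 + 4 = s" using b g1 g2 g3 h1 h27 h28 h29 h30 h31 h32 by linarith+
                then show ?thesis using cell9[where s'="s - 4"] b g1 g2 g3 h1 h27 h28 h29 h30 h31 h32 by simp
              qed
            qed
          qed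
        next
          assume h29: "r \<noteq> 1"
          show ?thesis
          proof (cases "r = 2")
            assume h33: "r = 2"
            show ?thesis
            proof (cases "s = 1")
              assume h34: "s = 1"
              show ?thesis using b g1 g2 g3 h1 h27 h28 h29 h33 h34 by auto
            next
              assume h34: "s \<noteq> 1"
              show ?thesis
              proof (cases "s = 2")
                assume h35: "s = 2"
                show ?thesis using b g1 g2 g3 h1 h27 h28 h29 h33 h34 h35 by auto
              next
                assume h35: "s \<noteq> 2"
                show ?thesis
                proof (cases "s = 3")
                  assume h36: "s = 3"
                  show ?thesis using b g1 g2 g3 h1 h27 h28 h29 h33 h34 h35 h36 by auto
                next
                  assume h36: "s \<noteq> 3"
                  have "s - 4 + 4 = s" using b g1 g2 g3 h1 h27 h28 h29 h33 h34 h35 h36 by linarith+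
                  then show ?thesis using cell10[where s'="s - 4"] b g1 g2 g3 h1 h27 h28 h29 h33 h34 h35 h36 by simp
                qed
              qed
            qed
          next
            assume h33: "r \<noteq> 2"
            show ?thesis
            proof (cases "s = 1")
              assume h37: "s = 1"
              show ?thesis using b g1 g2 g3 h1 h27 h28 h29 h33 h37 by auto
            next
              assume h37: "s \<noteq> 1"
              have "r - 3 + 3 = r" "s - 2 + 2 = s" using b g1 g2 g3 h1 h27 h28 h29 h33 h37 by linarith+
              then show ?thesis using cell11[where r'="r - 3" and s'="s - 2"] b g1 g2 g3 h1 h27 h28 h29 h33 h37 by simp
            qed
          qed
        qed
      next
        assume h28: "p \<noteq> 2"
        show ?thesis
        proof (cases "r = 1")
          assume h38: "r = 1"
          show ?thesis
          proof (cases "p = 3")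
            assume h39: "p = 3"
            show ?thesis
            proof (cases "s = 1")
              assume h40: "s = 1"
              show ?thesis using b g1 g2 g3 h1 h27 h28 h38 h39 h40 by auto
            next
              assume h40: "s \<noteq> 1"
              show ?thesis
              proof (cases "s = 2")
                assume h41: "s = 2"
                show ?thesis using b g1 g2 g3 h1 h27 h28 h38 h39 h40 h41 by auto
              next
                assume h41: "s \<noteq> 2"
                show ?thesis
                proof (cases "s = 3")
                  assume h42: "s = 3"
                  show ?thesis using b g1 g2 g3 h1 h27 h28 h38 h39 h40 h41 h42 by auto
                next
                  assume h42: "s \<noteq> 3"
                  have "s - 4 + 4 = s" using b g1 g2 g3 h1 h27 h28 h38 h39 h40 h41 h42 by linarith+
                  then show ?thesis using cell12[where s'="s - 4"] b g1 g2 g3 h1 h27 h28 h38 h39 h40 h41 h42 by simp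
                qed
              qed
            qed
          next
            assume h39: "p \<noteq> 3"
            show ?thesis
            proof (cases "s = 1")
              assume h43: "s = 1"
              show ?thesis using b g1 g2 g3 h1 h27 h28 h38 h39 h43 by auto
            next
              assume h43: "s \<noteq> 1"
              have "p - 4 + 4 = p" "s - 2 + 2 = s" using b g1 g2 g3 h1 h27 h28 h38 h39 h43 by linarith+
              then show ?thesis using cell13[where p'="p - 4" and s'="s - 2"] b g1 g2 g3 h1 h27 h28 h38 h39 h43 by simp
            qed
          qed
        next
          assume h38: "r \<noteq> 1"
          show ?thesis
          proof (cases "s = 1")
            assume h44: "s = 1"
            show ?thesis using b g1 g2 g3 h1 h27 h28 h38 h44 by auto
          next
            assume h44: "s \<noteq> 1"
            have "p - 3 + 3 = p" "r - 2 + 2 = r" "s - 2 + 2 = s" using b g1 g2 g3 h1 h27 h28 h38 h44 by linarith+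
            then show ?thesis using cell14[where p'="p - 3" and r'="r - 2" and s'="s - 2"] b g1 g2 g3 h1 h27 h28 h38 h44 by simp
          qed
        qed
      qed
    next
      assume h27: "q \<noteq> 1"
      show ?thesis
      proof (cases "q = 2")
        assume h45: "q = 2"
        show ?thesis
        proof (cases "p = 2")
          assume h46: "p = 2"
          show ?thesis
          proof (cases "r = 1")
            assume h47: "r = 1"
            show ?thesis
            proof (cases "s = 1")
              assume h48: "s = 1"
              show ?thesis using b g1 g2 g3 h1 h27 h45 h46 h47 h48 by auto
            next
              assume h48: "s \<noteq> 1"
              show ?thesis
              proof (cases "s = 2")
                assume h49: "s = 2"
                show ?thesis using b g1 g2 g3 h1 h27 h45 h46 h47 h48 h49 by auto
              next
                assume h49: "s \<noteq> 2"
                have "s - 3 + 3 = s" using b g1 g2 g3 h1 h27 h45 h46 h47 h48 h49 by linarith+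
                then show ?thesis using cell15[where s'="s - 3"] b g1 g2 g3 h1 h27 h45 h46 h47 h48 h49 by simp
              qed
            qed
          next
            assume h47: "r \<noteq> 1"
            show ?thesis
            proof (cases "r = 2")
              assume h50: "r = 2"
              show ?thesis
              proof (cases "s = 1")
                assume h51: "s = 1"
                show ?thesis using b g1 g2 g3 h1 h27 h45 h46 h47 h50 h51 by auto
              next
                assume h51: "s \<noteq> 1"
                show ?thesis
                proof (cases "s = 2")
                  assume h52: "s = 2"
                  show ?thesis using b g1 g2 g3 h1 h27 h45 h46 h47 h50 h51 h52 by auto
                next
                  assume h52: "s \<noteq> 2"
                  have "s - 3 + 3 = s" using b g1 g2 g3 h1 h27 h45 h46 h47 h50 h51 h52 by linarith+
                  then show ?thesis using cell16[where s'="s - 3"] b g1 g2 g3 h1 h27 h45 h46 h47 h50 h51 h52 by simp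
                qed
              qed
            next
              assume h50: "r \<noteq> 2"
              have "r - 3 + 3 = r" "s - 1 + 1 = s" using b g1 g2 g3 h1 h27 h45 h46 h47 h50 by linarith+
              then show ?thesis using cell17[where r'="r - 3" and s'="s - 1"] b g1 g2 g3 h1 h27 h45 h46 h47 h50 by simp
            qed
          qed
        next
          assume h46: "p \<noteq> 2"
          show ?thesis
          proof (cases "r = 1")
            assume h53: "r = 1"
            show ?thesis
            proof (cases "p = 3")
              assume h54: "p = 3"
              show ?thesis
              proof (cases "s = 1")
                assume h55: "s = 1"
                show ?thesis using b g1 g2 g3 h1 h27 h45 h46 h53 h54 h55 by auto
              next
                assume h55: "s \<noteq> 1"
                show ?thesis
                proof (cases "s = 2")
                  assume h56: "s = 2"
                  show ?thesis using b g1 g2 g3 h1 h27 h45 h46 h53 h54 h55 h56 by auto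
                next
                  assume h56: "s \<noteq> 2"
                  have "s - 3 + 3 = s" using b g1 g2 g3 h1 h27 h45 h46 h53 h54 h55 h56 by linarith+
                  then show ?thesis using cell18[where s'="s - 3"] b g1 g2 g3 h1 h27 h45 h46 h53 h54 h55 h56 by simp
                qed
              qed
            next
              assume h54: "p \<noteq> 3"
              have "p - 4 + 4 = p" "s - 1 + 1 = s" using b g1 g2 g3 h1 h27 h45 h46 h53 h54 by linarith+
              then show ?thesis using cell19[where p'="p - 4" and s'="s - 1"] b g1 g2 g3 h1 h27 h45 h46 h53 h54 by simp
            qed
          next
            assume h53: "r \<noteq> 1"
            have "p - 3 + 3 = p" "r - 2 + 2 = r" "s - 1 + 1 = s" using b g1 g2 g3 h1 h27 h45 h46 h53 by linarith+
            then show ?thesis using cell20[where p'="p - 3" and r'="r - 2" and s'="s - 1"] b g1 g2 g3 h1 h27 h45 h46 h53 by simp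
          qed
        qed
      next
        assume h45: "q \<noteq> 2"
        show ?thesis
        proof (cases "q = 3")
          assume h57: "q = 3"
          show ?thesis
          proof (cases "s = 1")
            assume h58: "s = 1"
            show ?thesis
            proof (cases "p = 2")
              assume h59: "p = 2"
              show ?thesis
              proof (cases "r = 1")
                assume h60: "r = 1"
                show ?thesis using b g1 g2 g3 h1 h27 h45 h57 h58 h59 h60 by auto
              next
                assume h60: "r \<noteq> 1"
                show ?thesis
                proof (cases "r = 2")
                  assume h61: "r = 2"
                  show ?thesis using b g1 g2 g3 h1 h27 h45 h57 h58 h59 h60 h61 by auto
                next
                  assume h61: "r \<noteq> 2"
                  have "r - 3 + 3 = r" using b g1 g2 g3 h1 h27 h45 h57 h58 h59 h60 h61 by linarith+
                  then show ?thesis using cell21[where r'="r - 3"] b g1 g2 g3 h1 h27 h45 h57 h58 h59 h60 h61 by simp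
                qed
              qed
            next
              assume h59: "p \<noteq> 2"
              show ?thesis
              proof (cases "r = 1")
                assume h62: "r = 1"
                show ?thesis
                proof (cases "p = 3")
                  assume h63: "p = 3"
                  show ?thesis using b g1 g2 g3 h1 h27 h45 h57 h58 h59 h62 h63 by auto
                next
                  assume h63: "p \<noteq> 3"
                  have "p - 4 + 4 = p" using b g1 g2 g3 h1 h27 h45 h57 h58 h59 h62 h63 by linarith+
                  then show ?thesis using cell22[where p'="p - 4"] b g1 g2 g3 h1 h27 h45 h57 h58 h59 h62 h63 by simp
                qed
              next
                assume h62: "r \<noteq> 1"
                have "p - 3 + 3 = p" "r - 2 + 2 = r" using b g1 g2 g3 h1 h27 h45 h57 h58 h59 h62 by linarith+
                then show ?thesis using cell23[where p'="p - 3" and r'="r - 2"] b g1 g2 g3 h1 h27 h45 h57 h58 h59 h62 by simp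
              qed
            qed
          next
            assume h58: "s \<noteq> 1"
            have "p - 2 + 2 = p" "r - 1 + 1 = r" "s - 2 + 2 = s" using b g1 g2 g3 h1 h27 h45 h57 h58 by linarith+
            then show ?thesis using cell24[where p'="p - 2" and r'="r - 1" and s'="s - 2"] b g1 g2 g3 h1 h27 h45 h57 h58 by simp
          qed
        next
          assume h57: "q \<noteq> 3"
          have "p - 2 + 2 = p" "q - 4 + 4 = q" "r - 1 + 1 = r" "s - 1 + 1 = s" using b g1 g2 g3 h1 h27 h45 h57 by linarith+
          then show ?thesis using cell25[where p'="p - 2" and q'="q - 4" and r'="r - 1" and s'="s - 1"] b g1 g2 g3 h1 h27 h45 h57 by simp
        qed
      qed
    qed
  qed
qed

lemma count_rep: "count_list (replicate n x) y = (if x = y then n else 0)"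
  by (induction n) auto

lemma rl4: "rl [(a, p), (b, q), (c, r), (d, s)] = replicate p a @ replicate q b @ replicate r c @ replicate s d"
  by (simp add: rl_def)

lemma core_good:
  assumes "good_form True False w"
  shows "\<forall>v\<in>BR w. rich v"
proof -
  consider (A) n2 n4 where "w = [True] @ replicate n2 False @ [True] @ replicate n4 False"
    | (B) n1 n3 where "w = replicate n1 True @ [False] @ replicate n3 True @ [False]"
    | (C) n1 n2 n3 n4 where "(n2, n4) \<in> {(3,1),(2,2),(1,3)}" "(n1, n3) \<in> {(3,1),(2,2),(1,3)}"
        "w = replicate n1 True @ replicate n2 False @ replicate n3 True @ replicate n4 False"
    using assms unfolding good_form_def by blast
  then show ?thesis
  proof cases
    case A
    then have "count_list w True = 2" by (simp add: count_list_append count_rep)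
    then show ?thesis by (rule two_true_BR)
  next
    case B
    then have "count_list w False = 2" by (simp add: count_list_append count_rep)
    then show ?thesis by (rule two_false_BR)
  next
    case C
    from C(1) C(2) show ?thesis unfolding C(3)
      using S0 S1 S2 S3 S4 S5 S6 S7 S8 by auto
  qed
qed

lemma core:
  fixes p q r s :: nat
  assumes b: "1 \<le> p" "1 \<le> q" "1 \<le> r" "1 \<le> s" "7 < p + q + r + s"
  shows "(\<forall>v\<in>BR (rl [(True, p), (False, q), (True, r), (False, s)]). rich v)
     \<longleftrightarrow> good_form True False (rl [(True, p), (False, q), (True, r), (False, s)])"
proof
  assume "good_form True False (rl [(True, p), (False, q), (True, r), (False, s)])"
  then show "\<forall>v\<in>BR (rl [(True, p), (False, q), (True, r), (False, s)]). rich v" by (rule core_good)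
next
  assume all: "\<forall>v\<in>BR (rl [(True, p), (False, q), (True, r), (False, s)]). rich v"
  show "good_form True False (rl [(True, p), (False, q), (True, r), (False, s)])"
  proof (rule ccontr)
    assume ng: "\<not> good_form True False (rl [(True, p), (False, q), (True, r), (False, s)])"
    have g1: "\<not> (p = 1 \<and> r = 1)"
    proof
      assume "p = 1 \<and> r = 1"
      then have "good_form True False (rl [(True, p), (False, q), (True, r), (False, s)])"
        unfolding good_form_def rl4 using b by auto
      then show False using ng by simp
    qed
    have g2: "\<not> (q = 1 \<and> s = 1)"
    proof
      assume "q = 1 \<and> s = 1"
      then have "good_form True False (rl [(True, p), (False, q), (True, r), (False, s)])"
        unfolding good_form_def rl4 using b by auto
      then show False using ng by simp
    qed
    have g3: "\<not> ((p = 3 \<and> r = 1 \<or> p = 2 \<and> r = 2 \<or> p = 1 \<and> r = 3) \<and> (q = 3 \<and> s = 1 \<or> q = 2 \<and> s = 2 \<or> q = 1 \<and> s = 3))"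
    proof
      assume "(p = 3 \<and> r = 1 \<or> p = 2 \<and> r = 2 \<or> p = 1 \<and> r = 3) \<and> (q = 3 \<and> s = 1 \<or> q = 2 \<and> s = 2 \<or> q = 1 \<and> s = 3)"
      then have "(q, s) \<in> {(3,1),(2,2),(1,3)}" "(p, r) \<in> {(3,1),(2,2),(1,3)}" by auto
      then have "good_form True False (rl [(True, p), (False, q), (True, r), (False, s)])"
        unfolding good_form_def rl4 by blast
      then show False using ng by simp
    qed
    have "8 \<le> p + q + r + s" using b by simp
    then show False using core_bad[OF b(1-4) _ g1 g2 g3] all by blast
  qed
qed




lemma rad: "1 \<le> p \<Longrightarrow> (rest = [] \<or> hd rest \<noteq> c) \<Longrightarrow> remdups_adj (replicate p c @ rest) = c # remdups_adj rest"
proof (induction p)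
  case 0 then show ?case by simp
next
  case (Suc p)
  show ?case
  proof (cases "p = 0")
    case True
    then show ?thesis using Suc.prems(2) by (cases rest) auto
  next
    case False
    then obtain p' where p': "p = Suc p'" by (cases p) auto
    have "remdups_adj (replicate (Suc p) c @ rest) = remdups_adj (c # c # (replicate p' c @ rest))"
      using p' by simp
    also have "\<dots> = remdups_adj (c # (replicate p' c @ rest))" by simp
    also have "\<dots> = remdups_adj (replicate p c @ rest)" using p' by simp
    also have "\<dots> = c # remdups_adj rest" using Suc.IH[OF _ Suc.prems(2)] False by simp
    finally show ?thesis .
  qed
qed

lemma run_split:
  assumes "runs w = Suc k"
  shows "\<exists>c p rest. 1 \<le> p \<and> w = replicate p c @ rest \<and> runs rest = k \<and> (rest = [] \<or> hd rest \<noteq> c)"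
proof -
  have "w \<noteq> []" using assms unfolding runs_def by auto
  then obtain c w' where w: "w = c # w'" by (cases w) auto
  define t where "t = takeWhile (\<lambda>x. x = c) w"
  define d where "d = dropWhile (\<lambda>x. x = c) w"
  have wd: "w = t @ d" unfolding t_def d_def by simp
  have "replicate (length t) c = t"
    by (rule replicate_length_same) (auto simp: t_def dest: set_takeWhileD)
  moreover have lt: "1 \<le> length t" unfolding t_def w by simp
  moreover have dd: "d = [] \<or> hd d \<noteq> c" unfolding d_def using hd_dropWhile[of "\<lambda>x. x = c" w] by auto
  ultimately have w2: "w = replicate (length t) c @ d" using wd by simp
  have "runs w = Suc (runs d)" unfolding runs_def using rad[OF lt dd] w2 by simp
  then have "runs d = k" using assms by simp
  then show ?thesis using w2 lt dd by blast
qed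

lemma good_hd: "good_form True False x \<Longrightarrow> x \<noteq> [] \<and> hd x = True"
  unfolding good_form_def by auto

lemma bool_main:
  fixes w :: "bool list"
  assumes len: "length w > 7" and ru: "runs w = 4"
  shows "(\<forall>v\<in>BR w. rich v) \<longleftrightarrow> good_form True False w \<or> good_form True False (map Not w)"
proof -
  obtain c1 p r1 where A: "1 \<le> p" "w = replicate p c1 @ r1" "runs r1 = 3" "r1 = [] \<or> hd r1 \<noteq> c1"
    using run_split[of w 3] ru by auto
  obtain c2 q r2 where B: "1 \<le> q" "r1 = replicate q c2 @ r2" "runs r2 = 2" "r2 = [] \<or> hd r2 \<noteq> c2"
    using run_split[of r1 2] A(3) by auto
  obtain c3 r r3 where C: "1 \<le> r" "r2 = replicate r c3 @ r3" "runs r3 = 1" "r3 = [] \<or> hd r3 \<noteq> c3"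
    using run_split[of r2 1] B(3) by auto
  obtain c4 s r4 where D: "1 \<le> s" "r3 = replicate s c4 @ r4" "runs r4 = 0" "r4 = [] \<or> hd r4 \<noteq> c4"
    using run_split[of r3 0] C(3) by auto
  have r4: "r4 = []" using D(3) unfolding runs_def by simp
  have "hd r1 = c2" using B(1,2) by (cases q) auto
  then have c2: "c2 = (\<not> c1)" using A(4) B(1,2) by (cases q) auto
  have "hd r2 = c3" using C(1,2) by (cases r) auto
  then have c3: "c3 = c1" using B(4) C(1,2) c2 by (cases r) auto
  have "hd r3 = c4" using D(1,2) by (cases s) auto
  then have c4: "c4 = (\<not> c1)" using C(4) D(1,2) c3 by (cases s) auto
  have w: "w = rl [(c1, p), (\<not> c1, q), (c1, r), (\<not> c1, s)]"
    using A(2) B(2) C(2) D(2) r4 c2 c3 c4 by (simp add: rl4)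
  have l: "7 < p + q + r + s" using len w by (simp add: rl4)
  show ?thesis
  proof (cases c1)
    case True
    then have w': "w = rl [(True, p), (False, q), (True, r), (False, s)]" using w by simp
    have "\<not> good_form True False (map Not w)"
      using good_hd[of "map Not w"] A(1) unfolding w' rl4 by (cases p) auto
    then show ?thesis using core[OF A(1) B(1) C(1) D(1) l] w' by simp
  next
    case False
    then have w': "w = rl [(False, p), (True, q), (False, r), (True, s)]" using w by simp
    have mw: "map Not w = rl [(True, p), (False, q), (True, r), (False, s)]" unfolding w' rl4 by simp
    have "\<not> good_form True False w"
      using good_hd[of w] A(1) unfolding w' rl4 by (cases p) auto
    moreover have "(\<forall>v\<in>BR w. rich v) \<longleftrightarrow> (\<forall>v\<in>BR (map Not w). rich v)"
      using BR_rich_map[of Not w] by (simp add: inj_def)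
    ultimately show ?thesis using core[OF A(1) B(1) C(1) D(1) l] mw by simp
  qed
qed

lemma good_form_map:
  assumes "inj f"
  shows "good_form (f x) (f y) (map f u) = good_form x y u"
proof -
  have e: "\<And>v. (map f u = map f v) = (u = v)" using inj_map_eq_map[OF assms] by blast
  have r: "\<And>n c. replicate n (f c) = map f (replicate n c)" by simp
  have s: "\<And>c. [f c] = map f [c]" by simp
  show ?thesis unfolding good_form_def r s map_append[symmetric] e ..
qed

theorem mainTheorem12:
  fixes a b :: 'a and w :: "'a list"
  assumes "a \<noteq> b"
    and "set w \<subseteq> {a, b}"
    and "length w > 7"
    and "runs w = 4"
  shows "(\<forall>v \<in> BR w. rich v) \<longleftrightarrow> (good_form a b w \<or> good_form a b (compl_ab a b w))"
proof -
  define h where "h = (\<lambda>x::bool. if x then a else b)"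
  define w' where "w' = map (\<lambda>x. x = a) w"
  have inj: "inj h" unfolding h_def inj_def using assms(1) by auto
  have hw: "map h w' = w"
    unfolding h_def w'_def using assms(2) by (induction w) auto
  have ha: "h True = a" and hb: "h False = b" unfolding h_def by auto
  have cw: "compl_ab a b w = map h (map Not w')"
    unfolding hw[symmetric] compl_ab_def using assms(1) by (auto simp: h_def)
  have len: "length w' > 7" using assms(3) unfolding w'_def by simp
  have ru: "runs w' = 4"
    using assms(4) unfolding hw[symmetric] runs_def remdups_adj_map_injective[OF inj] by simp
  have "(\<forall>v \<in> BR w. rich v) \<longleftrightarrow> (\<forall>v \<in> BR w'. rich v)"
    unfolding hw[symmetric] by (rule BR_rich_map[OF inj])
  also have "\<dots> \<longleftrightarrow> good_form True False w' \<or> good_form True False (map Not w')"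
    by (rule bool_main[OF len ru])
  also have "\<dots> \<longleftrightarrow> good_form (h True) (h False) (map h w') \<or> good_form (h True) (h False) (map h (map Not w'))"
    unfolding good_form_map[OF inj] ..
  also have "\<dots> \<longleftrightarrow> (good_form a b w \<or> good_form a b (compl_ab a b w))"
    unfolding cw ha hb hw ..
  finally show ?thesis .
qed



end
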